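(* Let $n\ge 1$ and let $G$ be a subgraph of the complete bipartite graph $K_{n,n}$. Then $G$ can be embedded in any projective plane of order at least $n$.
   Context: A finite projective plane of order $q$ has $q^2+q+1$ points and lines, $q+1$ points on each line and $q+1$ lines through each point; any two distinct points lie on a unique line and any two lines meet in a unique point. An embedding of a simple graph $G=(V,E)$ into a projective plane is an injective map $\phi$ from $V$ to the points such that the induced map sending an edge $ab$ to the line through $\phi(a),\phi(b)$ is injective on $E$. *)

theory Defs
  imports Main
begin

definition projective_plane :: "'p set \<Rightarrow> 'l set \<Rightarrow> ('p \<Rightarrow> 'l \<Rightarrow> bool) \<Rightarrow> nat \<Rightarrow> bool" where
  "projective_plane P L I q \<longleftrightarrow>
     finite P \<and> finite L \<and>
     card P = q^2 + q + 1 \<and> card L = q^2 + q + 1 \<and>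
     (\<forall>l\<in>L. card {p\<in>P. I p l} = q + 1) \<and>
     (\<forall>p\<in>P. card {l\<in>L. I p l} = q + 1) \<and>
     (\<forall>p\<in>P. \<forall>p'\<in>P. p \<noteq> p' \<longrightarrow> (\<exists>!l. l \<in> L \<and> I p l \<and> I p' l)) \<and>
     (\<forall>l\<in>L. \<forall>l'\<in>L. l \<noteq> l' \<longrightarrow> (\<exists>!p. p \<in> P \<and> I p l \<and> I p l'))"

definition edge_line :: "'l set \<Rightarrow> ('p \<Rightarrow> 'l \<Rightarrow> bool) \<Rightarrow> ('v \<Rightarrow> 'p) \<Rightarrow> 'v set \<Rightarrow> 'l" where
  "edge_line L I \<phi> e = (THE l. l \<in> L \<and> (\<forall>x\<in>e. I (\<phi> x) l))"

definition graph_embedding :: "'v set \<Rightarrow> 'v set set \<Rightarrow> 'p set \<Rightarrow> 'l set \<Rightarrow> ('p \<Rightarrow> 'l \<Rightarrow> bool) \<Rightarrow> ('v \<Rightarrow> 'p) \<Rightarrow> bool" where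
  "graph_embedding V E P L I \<phi> \<longleftrightarrow>
     \<phi> ` V \<subseteq> P \<and> inj_on \<phi> V \<and> inj_on (edge_line L I \<phi>) E"

end

theory Submission
  imports Defs
begin

lemma ex1_uniq: "\<exists>!x. Q x \<Longrightarrow> Q a \<Longrightarrow> Q b \<Longrightarrow> a = b" by (metis Ex1_def)

lemma edge_line_props:
  assumes pp: "projective_plane P L I q"
    and "\<phi> a \<in> P" "\<phi> b \<in> P" "\<phi> a \<noteq> \<phi> b"
  shows "edge_line L I \<phi> {a,b} \<in> L \<and> I (\<phi> a) (edge_line L I \<phi> {a,b}) \<and> I (\<phi> b) (edge_line L I \<phi> {a,b})"
proof -
  have ex: "\<exists>!l. l \<in> L \<and> I (\<phi> a) l \<and> I (\<phi> b) l"
  proof -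
    note ptl = pp[unfolded projective_plane_def, THEN conjunct2, THEN conjunct2, THEN conjunct2, THEN conjunct2, THEN conjunct2, THEN conjunct2, THEN conjunct1]
    show ?thesis using ptl[rule_format, OF assms(2,3,4)] .
  qed
  have eq: "(\<lambda>l. l \<in> L \<and> (\<forall>x\<in>{a,b}. I (\<phi> x) l)) = (\<lambda>l. l \<in> L \<and> I (\<phi> a) l \<and> I (\<phi> b) l)"
    by auto
  have "(THE l. l \<in> L \<and> I (\<phi> a) l \<and> I (\<phi> b) l) \<in> L \<and> I (\<phi> a) (THE l. l \<in> L \<and> I (\<phi> a) l \<and> I (\<phi> b) l) \<and> I (\<phi> b) (THE l. l \<in> L \<and> I (\<phi> a) l \<and> I (\<phi> b) l)"
    by (rule theI'[OF ex])
  then show ?thesis unfolding edge_line_def eq .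
qed

theorem theorem3p1:
  fixes A B V :: "'v set" and E :: "'v set set"
    and P :: "'p set" and L :: "'l set" and I :: "'p \<Rightarrow> 'l \<Rightarrow> bool"
    and n q :: nat
  assumes "n \<ge> 1"
    and "card A = n" and "card B = n" and "A \<inter> B = {}"
    and "V \<subseteq> A \<union> B"
    and "E \<subseteq> {{a, b} | a b. a \<in> A \<and> b \<in> B}"
    and "\<forall>e\<in>E. e \<subseteq> V"
    and pp: "projective_plane P L I q"
    and "q \<ge> n"
  shows "\<exists>\<phi>. graph_embedding V E P L I \<phi>"
proof -
  note D = pp[unfolded projective_plane_def]
  note finP = D[THEN conjunct1]
  note finL = D[THEN conjunct2, THEN conjunct1]
  note cL = D[THEN conjunct2, THEN conjunct2, THEN conjunct2, THEN conjunct1]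
  note lpts = D[THEN conjunct2, THEN conjunct2, THEN conjunct2, THEN conjunct2, THEN conjunct1]
  note ptl = D[THEN conjunct2, THEN conjunct2, THEN conjunct2, THEN conjunct2, THEN conjunct2, THEN conjunct2, THEN conjunct1]
  note lp = D[THEN conjunct2, THEN conjunct2, THEN conjunct2, THEN conjunct2, THEN conjunct2, THEN conjunct2, THEN conjunct2]
  have "card L \<ge> 2" using cL \<open>q \<ge> n\<close> \<open>n \<ge> 1\<close> by (simp add: power2_eq_square)
  then obtain l1 l2 where l12: "l1 \<in> L" "l2 \<in> L" "l1 \<noteq> l2"
  proof -
    assume h: "\<And>l1 l2. l1 \<in> L \<Longrightarrow> l2 \<in> L \<Longrightarrow> l1 \<noteq> l2 \<Longrightarrow> thesis"
    from \<open>card L \<ge> 2\<close> obtain l1 where "l1 \<in> L" by fastforce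
    moreover have "card (L - {l1}) \<ge> 1" using \<open>card L \<ge> 2\<close> \<open>l1 \<in> L\<close> finL by simp
    then have "L - {l1} \<noteq> {}" by (metis card.empty not_one_le_zero)
    then obtain l2 where "l2 \<in> L - {l1}" by blast
    ultimately show thesis using h by blast
  qed
  have ex1: "\<exists>!p. p \<in> P \<and> I p l1 \<and> I p l2" using lp l12 by blast
  obtain X where X: "X \<in> P" "I X l1" "I X l2"
    and Xu: "\<And>p. p \<in> P \<Longrightarrow> I p l1 \<Longrightarrow> I p l2 \<Longrightarrow> p = X"
    using ex1 unfolding Ex1_def by blast
  define S1 where "S1 = {p\<in>P. I p l1} - {X}"
  define S2 where "S2 = {p\<in>P. I p l2} - {X}"
  have cS1: "card S1 = q" unfolding S1_def using lpts l12 X finP by (simp add: card_Diff_singleton)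
  have cS2: "card S2 = q" unfolding S2_def using lpts l12 X finP by (simp add: card_Diff_singleton)
  have finA: "finite A" using assms(1,2) card.infinite by fastforce
  have finB: "finite B" using assms(1,3) card.infinite by fastforce
  have fS1: "finite S1" unfolding S1_def using finP by simp
  have fS2: "finite S2" unfolding S2_def using finP by simp
  obtain f where f: "f ` A \<subseteq> S1" "inj_on f A"
    using card_le_inj[OF finA fS1] cS1 assms(2,9) by auto
  obtain g where g: "g ` B \<subseteq> S2" "inj_on g B"
    using card_le_inj[OF finB fS2] cS2 assms(3,9) by auto
  define \<phi> where "\<phi> x = (if x \<in> A then f x else g x)" for x
  have phiA: "\<phi> a \<in> P \<and> I (\<phi> a) l1 \<and> \<phi> a \<noteq> X \<and> \<not> I (\<phi> a) l2" if "a \<in> A" for a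
    using that f Xu unfolding \<phi>_def S1_def by auto
  have phiB: "\<phi> b \<in> P \<and> I (\<phi> b) l2 \<and> \<phi> b \<noteq> X \<and> \<not> I (\<phi> b) l1" if "b \<in> B" for b
    using that g Xu assms(4) unfolding \<phi>_def S2_def by auto
  have injAB: "inj_on \<phi> (A \<union> B)"
  proof (rule inj_onI)
    fix x y assume "x \<in> A \<union> B" "y \<in> A \<union> B" "\<phi> x = \<phi> y"
    then show "x = y"
    proof (elim UnE)
      assume "x \<in> A" "y \<in> A" then show ?thesis using \<open>\<phi> x = \<phi> y\<close> f(2) unfolding \<phi>_def inj_on_def by simp
    next
      assume "x \<in> B" "y \<in> B"
      moreover then have "x \<notin> A" "y \<notin> A" using assms(4) by auto
      ultimately show ?thesis using \<open>\<phi> x = \<phi> y\<close> g(2) unfolding \<phi>_def inj_on_def by simp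
    next
      assume "x \<in> A" "y \<in> B" then show ?thesis using \<open>\<phi> x = \<phi> y\<close> phiA phiB by metis
    next
      assume "x \<in> B" "y \<in> A" then show ?thesis using \<open>\<phi> x = \<phi> y\<close> phiA phiB by metis
    qed
  qed
  have el: "edge_line L I \<phi> {a,b} \<in> L \<and> I (\<phi> a) (edge_line L I \<phi> {a,b}) \<and> I (\<phi> b) (edge_line L I \<phi> {a,b})"
    if "a \<in> A" "b \<in> B" for a b
  proof -
    have "\<phi> a \<noteq> \<phi> b" using phiA[OF that(1)] phiB[OF that(2)] by auto
    moreover have "\<phi> a \<in> P" "\<phi> b \<in> P" using phiA[OF that(1)] phiB[OF that(2)] by auto
    ultimately show ?thesis using edge_line_props[OF pp, of \<phi> a b] by simp
  qed
  have key1: "a = a'" if "a \<in> A" "a' \<in> A" "b \<in> B" "m \<in> L" "I (\<phi> a) m" "I (\<phi> a') m" "I (\<phi> b) m" for a a' b m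
  proof (rule ccontr)
    assume "a \<noteq> a'"
    then have ne: "\<phi> a \<noteq> \<phi> a'" using injAB that by (meson UnI1 inj_on_def)
    have u: "\<exists>!l. l \<in> L \<and> I (\<phi> a) l \<and> I (\<phi> a') l" using ptl phiA[OF that(1)] phiA[OF that(2)] ne by blast
    have "m = l1" using ex1_uniq[OF u] phiA[OF that(1)] phiA[OF that(2)] that l12 by simp
    then show False using phiB[OF that(3)] that by simp
  qed
  have key2: "b = b'" if "b \<in> B" "b' \<in> B" "a \<in> A" "m \<in> L" "I (\<phi> b) m" "I (\<phi> b') m" "I (\<phi> a) m" for b b' a m
  proof (rule ccontr)
    assume "b \<noteq> b'"
    then have ne: "\<phi> b \<noteq> \<phi> b'" using injAB that by (meson UnI2 inj_on_def)
    have u: "\<exists>!l. l \<in> L \<and> I (\<phi> b) l \<and> I (\<phi> b') l" using ptl phiB[OF that(1)] phiB[OF that(2)] ne by blast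
    have "m = l2" using ex1_uniq[OF u] phiB[OF that(1)] phiB[OF that(2)] that l12 by simp
    then show False using phiA[OF that(3)] that by simp
  qed
  have injE: "inj_on (edge_line L I \<phi>) E"
  proof (rule inj_onI)
    fix e e' assume "e \<in> E" "e' \<in> E" and eq: "edge_line L I \<phi> e = edge_line L I \<phi> e'"
    obtain a b where ab: "e = {a,b}" "a \<in> A" "b \<in> B" using \<open>e \<in> E\<close> assms(6) by blast
    obtain a' b' where ab': "e' = {a',b'}" "a' \<in> A" "b' \<in> B" using \<open>e' \<in> E\<close> assms(6) by blast
    define m where "m = edge_line L I \<phi> e"
    have m1: "m \<in> L" "I (\<phi> a) m" "I (\<phi> b) m" using el[OF ab(2,3)] ab(1) m_def by auto
    have m2: "I (\<phi> a') m" "I (\<phi> b') m" using el[OF ab'(2,3)] ab'(1) m_def eq by auto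
    have "a = a'" using key1[OF ab(2) ab'(2) ab(3) m1(1) m1(2) m2(1) m1(3)] .
    moreover have "b = b'" using key2[OF ab(3) ab'(3) ab(2) m1(1) m1(3) m2(2) m1(2)] .
    ultimately show "e = e'" using ab ab' by simp
  qed
  have "graph_embedding V E P L I \<phi>"
    unfolding graph_embedding_def
  proof (intro conjI)
    show "\<phi> ` V \<subseteq> P"
    proof
      fix p assume "p \<in> \<phi> ` V"
      then obtain x where "x \<in> V" "p = \<phi> x" by blast
      then have "x \<in> A \<or> x \<in> B" using assms(5) by blast
      then show "p \<in> P" using phiA phiB \<open>p = \<phi> x\<close> by blast
    qed
    show "inj_on \<phi> V" using inj_on_subset[OF injAB assms(5)] .
    show "inj_on (edge_line L I \<phi>) E" using injE .
  qed
  then show ?thesis by blast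
qed

end
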